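(* Let $\lambda_1<\dots<\lambda_n$ be real numbers, $I=[a,b]$ with $a<b$, and for $\alpha>0$ and $1\le j<n$ let $J_j(\alpha)=\{x\in\mathbb{R}:[x,x+\alpha]\subset(\lambda_j,\lambda_{j+1})\}$. Let $\Lambda(I)=\{i:\lambda_i,\lambda_{i+1}\in I\}$ and for $a_1,\dots,a_k>0$ let $$\Sigma_k(a_1,\dots,a_k)=\bigcup_{i_1,\dots,i_k\in\Lambda(I)\text{ all distinct}}\ \prod_{j=1}^kJ_{i_j}(a_j).$$ Then for $(y_1,\dots,y_k)\in(a,b)^k$, $(y_1,\dots,y_k)\in\Sigma_k(a_1,\dots,a_k)$ holds if and only if: (i) $[y_l,y_l+a_l]\cap[y_j,y_j+a_j]=\emptyset$ for $1\le l<j\le k$; (ii) $\lambda_l\notin[y_j,y_j+a_j]$ for all $1\le j\le k$, $1\le l\le n$; (iii) writing $y_0=a$, $y_{k+1}=b$, $\{\lambda_1,\dots,\lambda_n\}\cap[y_p,y_q]\neq\emptyset$ for all $p,q\in\{0,\dots,k+1\}$ with $y_p<y_q$. *)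

theory Defs
  imports Complex_Main
begin

text \<open>The points lambda_1 < ... < lambda_n are given as a function lam :: nat => real,
  only the values at 1..n being relevant.\<close>

definition Jset :: "(nat \<Rightarrow> real) \<Rightarrow> nat \<Rightarrow> real \<Rightarrow> real set" where
  "Jset lam j \<alpha> = {x. {x..x+\<alpha>} \<subseteq> {lam j<..<lam (Suc j)}}"

definition Lam :: "(nat \<Rightarrow> real) \<Rightarrow> nat \<Rightarrow> real \<Rightarrow> real \<Rightarrow> nat set" where
  "Lam lam n a b = {i. 1 \<le> i \<and> i < n \<and> lam i \<in> {a..b} \<and> lam (Suc i) \<in> {a..b}}"

text \<open>Sigma_k(a_1,...,a_k): k-tuples are represented as functions nat => real whose
  values at 1..k are the coordinates.\<close>

definition Sigma_k :: "(nat \<Rightarrow> real) \<Rightarrow> nat \<Rightarrow> real \<Rightarrow> real \<Rightarrow> nat \<Rightarrow> (nat \<Rightarrow> real)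
    \<Rightarrow> (nat \<Rightarrow> real) set" where
  "Sigma_k lam n a b k \<alpha> = {y. \<exists>i::nat \<Rightarrow> nat. inj_on i {1..k} \<and>
      (\<forall>j\<in>{1..k}. i j \<in> Lam lam n a b \<and> y j \<in> Jset lam (i j) (\<alpha> j))}"

end

theory Submission
  imports Defs
begin
lemma Jset_iff: "(\<alpha>::real) \<ge> 0 \<Longrightarrow> x \<in> Jset lam i \<alpha> \<longleftrightarrow> lam i < x \<and> x + \<alpha> < lam (Suc i)"
  unfolding Jset_def by (auto simp: subset_eq)

lemma mono_le:
  fixes lam :: "nat \<Rightarrow> real"
  assumes mono: "\<And>i j. 1 \<le> i \<Longrightarrow> i < j \<Longrightarrow> j \<le> n \<Longrightarrow> lam i < lam j"
  and h: "1 \<le> i" "i \<le> j" "j \<le> n"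
  shows "lam i \<le> lam j"
proof (cases "i = j")
  case False
  then have "i < j" using h by auto
  then show ?thesis using mono[of i j] h by auto
qed simp

lemma gap_empty:
  assumes mono: "\<And>i j. 1 \<le> i \<Longrightarrow> i < j \<Longrightarrow> j \<le> n \<Longrightarrow> lam i < (lam j::real)"
  and "1 \<le> i" "i < n" "1 \<le> l" "l \<le> n" "lam i < lam l" "lam l < lam (Suc i)"
  shows False
proof (cases "l \<le> i")
  case True then show ?thesis using mono_le[where lam=lam and n=n and i=l and j=i, OF mono] assms by auto
next
  case False then show ?thesis using mono_le[where lam=lam and n=n and i="Suc i" and j=l, OF mono] assms by auto
qed

lemma exists_gap:
  assumes mono: "\<And>i j. 1 \<le> i \<Longrightarrow> i < j \<Longrightarrow> j \<le> n \<Longrightarrow> lam i < (lam j::real)"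
  and apos: "\<alpha> > 0"
  and lo: "lam ` {1..n} \<inter> {a..y0} \<noteq> {}"
  and hi: "lam ` {1..n} \<inter> {y0..b} \<noteq> {}"
  and nl: "\<forall>l\<in>{1..n}. lam l \<notin> {y0..y0+\<alpha>}"
  shows "\<exists>i. i \<in> Lam lam n a b \<and> y0 \<in> Jset lam i \<alpha>"
proof -
  obtain l where l: "l \<in> {1..n}" "a \<le> lam l" "lam l \<le> y0"
  proof -
    have "\<exists>l\<in>{1..n}. lam l \<in> {a..y0}" using lo by auto
    then show ?thesis using that by auto
  qed
  have "lam l \<noteq> y0" using nl l apos by auto
  with l have l': "lam l < y0" by auto
  obtain m where m: "m \<in> {1..n}" "y0 \<le> lam m" "lam m \<le> b"
  proof -
    have "\<exists>l\<in>{1..n}. lam l \<in> {y0..b}" using hi by auto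
    then show ?thesis using that by auto
  qed
  have m': "lam m > y0 + \<alpha>" using nl m by force
  define S where "S = {l. 1 \<le> l \<and> l \<le> n \<and> lam l < y0}"
  have fin: "finite S" unfolding S_def by (rule finite_subset[of _ "{1..n}"]) auto
  have lS: "l \<in> S" using l l' unfolding S_def by auto
  define i where "i = Max S"
  have iS: "i \<in> S" unfolding i_def using fin lS Max_in by blast
  have li: "l \<le> i" unfolding i_def using fin lS by simp
  have im: "i < m"
  proof (rule ccontr)
    assume "\<not> i < m"
    then have "lam m \<le> lam i" using mono_le[where lam=lam and n=n and i=m and j=i, OF mono] m iS unfolding S_def by auto
    then show False using iS m unfolding S_def by auto
  qed
  have "Suc i \<notin> S" using fin unfolding i_def by (metis Max_ge Suc_n_not_le_n)
  then have s1: "lam (Suc i) \<ge> y0" using im m unfolding S_def by auto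
  then have s2: "lam (Suc i) > y0 + \<alpha>" using nl im m by force
  have "lam i \<ge> a" using mono_le[where lam=lam and n=n and i=l and j=i, OF mono] li l iS unfolding S_def by auto
  moreover have "lam (Suc i) \<le> b" using mono_le[where lam=lam and n=n and i="Suc i" and j=m, OF mono] im m by auto
  ultimately show ?thesis using iS s1 s2 apos im m unfolding S_def Lam_def
    by (intro exI[of _ i]) (auto simp: Jset_iff)
qed

theorem lemma11:
  fixes lam :: "nat \<Rightarrow> real" and n k :: nat and a b :: real
    and \<alpha> y :: "nat \<Rightarrow> real"
  assumes mono: "\<And>i j. 1 \<le> i \<Longrightarrow> i < j \<Longrightarrow> j \<le> n \<Longrightarrow> lam i < lam j"
    and ab: "a < b"
    and k: "k \<ge> 1"
    and apos: "\<And>j. j \<in> {1..k} \<Longrightarrow> \<alpha> j > 0"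
    and yin: "\<And>j. j \<in> {1..k} \<Longrightarrow> y j \<in> {a<..<b}"
  shows "y \<in> Sigma_k lam n a b k \<alpha> \<longleftrightarrow>
     ((\<forall>l\<in>{1..k}. \<forall>j\<in>{1..k}. l < j \<longrightarrow> {y l..y l + \<alpha> l} \<inter> {y j..y j + \<alpha> j} = {}) \<and>
      (\<forall>j\<in>{1..k}. \<forall>l\<in>{1..n}. lam l \<notin> {y j..y j + \<alpha> j}) \<and>
      (let y' = (\<lambda>p. if p = 0 then a else if p = k + 1 then b else y p) in
        \<forall>p\<in>{0..k+1}. \<forall>q\<in>{0..k+1}. y' p < y' q \<longrightarrow>
          lam ` {1..n} \<inter> {y' p..y' q} \<noteq> {}))"
proof
  assume "y \<in> Sigma_k lam n a b k \<alpha>"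
  then obtain i where inj: "inj_on i {1..k}"
    and iL: "\<And>j. j \<in> {1..k} \<Longrightarrow> i j \<in> Lam lam n a b"
    and iJ: "\<And>j. j \<in> {1..k} \<Longrightarrow> y j \<in> Jset lam (i j) (\<alpha> j)"
    unfolding Sigma_k_def by blast
  have G: "1 \<le> i j \<and> i j < n \<and> a \<le> lam (i j) \<and> lam (Suc (i j)) \<le> b \<and>
      lam (i j) < y j \<and> y j + \<alpha> j < lam (Suc (i j))" if "j \<in> {1..k}" for j
    using iL[OF that] iJ[OF that] apos[OF that] unfolding Lam_def by (auto simp: Jset_iff)
  have ord: "lam (Suc (i p)) \<le> lam (i q)" if "p \<in> {1..k}" "q \<in> {1..k}" "i p < i q" for p q
    using mono_le[where lam=lam and n=n and i="Suc (i p)" and j="i q", OF mono] G[OF that(1)] G[OF that(2)] that(3) by auto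
  have C1: "\<forall>l\<in>{1..k}. \<forall>j\<in>{1..k}. l < j \<longrightarrow> {y l..y l + \<alpha> l} \<inter> {y j..y j + \<alpha> j} = {}"
  proof (intro ballI impI)
    fix l j assume l: "l \<in> {1..k}" and j: "j \<in> {1..k}" and lj: "l < j"
    have "i l \<noteq> i j" using inj l j lj by (metis inj_on_contraD less_irrefl)
    then have "i l < i j \<or> i j < i l" by auto
    then show "{y l..y l + \<alpha> l} \<inter> {y j..y j + \<alpha> j} = {}"
    proof
      assume "i l < i j" then have "y l + \<alpha> l < y j" using ord[OF l j] G[OF l] G[OF j] by force
      then show ?thesis by auto
    next
      assume "i j < i l" then have "y j + \<alpha> j < y l" using ord[OF j l] G[OF l] G[OF j] by force
      then show ?thesis by auto
    qed
  qed
  have C2: "\<forall>j\<in>{1..k}. \<forall>l\<in>{1..n}. lam l \<notin> {y j..y j + \<alpha> j}"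
  proof (intro ballI notI)
    fix j l assume j: "j \<in> {1..k}" and l: "l \<in> {1..n}" and h: "lam l \<in> {y j..y j + \<alpha> j}"
    show False using gap_empty[where lam=lam and n=n, OF mono, of "i j" l] G[OF j] l h by auto
  qed
  have C3: "\<forall>p\<in>{0..k+1}. \<forall>q\<in>{0..k+1}. y' p < y' q \<longrightarrow> lam ` {1..n} \<inter> {y' p..y' q} \<noteq> {}"
    if y'def: "y' = (\<lambda>p. if p = 0 then a else if p = k + 1 then b else y p)" for y'
  proof (intro ballI impI)
    fix p q assume p: "p \<in> {0..k+1}" and q: "q \<in> {0..k+1}" and pq: "y' p < y' q"
    have k1: "1 \<in> {1..k}" using k by auto
    consider "p = 0" | "p \<in> {1..k}" | "p = k+1" using p by fastforce
    then show "lam ` {1..n} \<inter> {y' p..y' q} \<noteq> {}"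
    proof cases
      case 1
      consider "q = 0" | "q \<in> {1..k}" | "q = k+1" using q by fastforce
      then show ?thesis
      proof cases
        case 1 then show ?thesis using pq \<open>p = 0\<close> by simp
      next
        case 2
        have "lam (i q) \<in> lam ` {1..n} \<inter> {y' p..y' q}" using G[OF 2] 2 \<open>p = 0\<close> y'def by auto
        then show ?thesis by blast
      next
        case 3
        have "lam (i 1) \<in> lam ` {1..n} \<inter> {y' p..y' q}"
          using G[OF k1] apos[OF k1] \<open>p = 0\<close> 3 y'def ab by auto
        then show ?thesis by blast
      qed
    next
      case 2
      have yp: "y' p = y p" using 2 y'def by auto
      consider "q = 0" | "q \<in> {1..k}" | "q = k+1" using q by fastforce
      then show ?thesis
      proof cases
        case 1 then show ?thesis using pq yp yin[OF 2] y'def by auto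
      next
        case 3
        have "lam (Suc (i p)) \<in> lam ` {1..n} \<inter> {y' p..y' q}"
          using G[OF 2] yp 3 y'def apos[OF 2] by auto
        then show ?thesis by blast
      next
        case q2: 2
        have yq: "y' q = y q" using q2 y'def by auto
        have "p \<noteq> q" using pq by auto
        then have "i p \<noteq> i q" using inj 2 q2 by (meson inj_on_contraD)
        moreover have "\<not> i q < i p"
        proof
          assume "i q < i p"
          then show False using ord[OF q2 2] G[OF 2] G[OF q2] pq yp yq apos[OF q2] by linarith
        qed
        ultimately have "i p < i q" by auto
        then have "lam (Suc (i p)) \<in> lam ` {1..n} \<inter> {y' p..y' q}"
          using ord[OF 2 q2] G[OF 2] G[OF q2] yp yq apos[OF 2] by auto
        then show ?thesis by blast
      qed
    next
      case 3
      have "y' q \<le> b" using q yin y'def ab by (cases "q = 0 \<or> q = k+1") (auto simp: less_imp_le)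
      then show ?thesis using pq 3 y'def by auto
    qed
  qed
  show "(\<forall>l\<in>{1..k}. \<forall>j\<in>{1..k}. l < j \<longrightarrow> {y l..y l + \<alpha> l} \<inter> {y j..y j + \<alpha> j} = {}) \<and>
      (\<forall>j\<in>{1..k}. \<forall>l\<in>{1..n}. lam l \<notin> {y j..y j + \<alpha> j}) \<and>
      (let y' = (\<lambda>p. if p = 0 then a else if p = k + 1 then b else y p) in
        \<forall>p\<in>{0..k+1}. \<forall>q\<in>{0..k+1}. y' p < y' q \<longrightarrow>
          lam ` {1..n} \<inter> {y' p..y' q} \<noteq> {})"
  proof -
    have C3': "let y' = (\<lambda>p. if p = 0 then a else if p = k + 1 then b else y p) in
        \<forall>p\<in>{0..k+1}. \<forall>q\<in>{0..k+1}. y' p < y' q \<longrightarrow>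
          lam ` {1..n} \<inter> {y' p..y' q} \<noteq> {}"
      unfolding Let_def by (rule C3[OF refl])
    show ?thesis using C1 C2 C3' by (intro conjI)
  qed
next
  assume H: "(\<forall>l\<in>{1..k}. \<forall>j\<in>{1..k}. l < j \<longrightarrow> {y l..y l + \<alpha> l} \<inter> {y j..y j + \<alpha> j} = {}) \<and>
      (\<forall>j\<in>{1..k}. \<forall>l\<in>{1..n}. lam l \<notin> {y j..y j + \<alpha> j}) \<and>
      (let y' = (\<lambda>p. if p = 0 then a else if p = k + 1 then b else y p) in
        \<forall>p\<in>{0..k+1}. \<forall>q\<in>{0..k+1}. y' p < y' q \<longrightarrow>
          lam ` {1..n} \<inter> {y' p..y' q} \<noteq> {})"
  define y' where "y' = (\<lambda>p. if p = 0 then a else if p = k + 1 then b else y p)"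
  have H1: "\<And>l j. l \<in> {1..k} \<Longrightarrow> j \<in> {1..k} \<Longrightarrow> l < j \<Longrightarrow> {y l..y l + \<alpha> l} \<inter> {y j..y j + \<alpha> j} = {}"
    using conjunct1[OF H] by blast
  have H2: "\<forall>j\<in>{1..k}. \<forall>l\<in>{1..n}. lam l \<notin> {y j..y j + \<alpha> j}" using conjunct1[OF conjunct2[OF H]] .
  have H3: "\<And>p q. p \<in> {0..k+1} \<Longrightarrow> q \<in> {0..k+1} \<Longrightarrow> y' p < y' q \<Longrightarrow>
          lam ` {1..n} \<inter> {y' p..y' q} \<noteq> {}"
    using conjunct2[OF conjunct2[OF H]] unfolding y'_def Let_def by blast
  have ex: "\<exists>i. i \<in> Lam lam n a b \<and> y j \<in> Jset lam i (\<alpha> j)" if j: "j \<in> {1..k}" for j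
  proof (rule exists_gap[OF mono apos[OF j]])
    have y0: "y' 0 = a" and yj: "y' j = y j" and yk: "y' (k+1) = b" using j unfolding y'_def by auto
    show "lam ` {1..n} \<inter> {a..y j} \<noteq> {}" using H3[of 0 j] j yin[OF j] y0 yj by auto
    show "lam ` {1..n} \<inter> {y j..b} \<noteq> {}" using H3[of j "k+1"] j yin[OF j] yk yj by auto
    show "\<forall>l\<in>{1..n}. lam l \<notin> {y j..y j + \<alpha> j}" using H2 j by blast
  qed
  then obtain i where i: "\<And>j. j \<in> {1..k} \<Longrightarrow> i j \<in> Lam lam n a b \<and> y j \<in> Jset lam (i j) (\<alpha> j)"
    by metis
  have G: "1 \<le> i j \<and> i j < n \<and> lam (i j) < y j \<and> y j + \<alpha> j < lam (Suc (i j))" if "j \<in> {1..k}" for j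
    using i[OF that] apos[OF that] unfolding Lam_def by (auto simp: Jset_iff)
  have same: False if p: "p \<in> {1..k}" and q: "q \<in> {1..k}" and eq: "i p = i q" and lt: "y p < y q" for p q
  proof -
    have "y' p < y' q" using p q lt unfolding y'_def by auto
    then have "lam ` {1..n} \<inter> {y' p..y' q} \<noteq> {}" using H3[of p q] p q by auto
    then have "\<exists>l\<in>{1..n}. lam l \<in> {y p..y q}" using p q unfolding y'_def by auto
    then obtain l where l: "l \<in> {1..n}" "y p \<le> lam l" "lam l \<le> y q" by auto
    show False using gap_empty[where lam=lam and n=n, OF mono, of "i p" l] G[OF p] G[OF q] eq l apos[OF p] apos[OF q] by auto
  qed
  have "inj_on i {1..k}"
  proof (rule inj_onI)
    fix p q assume p: "p \<in> {1..k}" and q: "q \<in> {1..k}" and eq: "i p = i q"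
    show "p = q"
    proof (rule ccontr)
      assume "p \<noteq> q"
      then have "{y p..y p + \<alpha> p} \<inter> {y q..y q + \<alpha> q} = {}"
        using H1[OF p q] H1[OF q p] by (cases "p < q") (auto simp: Int_commute)
      then have "y p \<noteq> y q" using apos[OF p] apos[OF q] by auto
      then show False using same[OF p q eq] same[OF q p eq[symmetric]] by linarith
    qed
  qed
  then show "y \<in> Sigma_k lam n a b k \<alpha>" unfolding Sigma_k_def using i by blast
qed

end
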